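(* Let $n\ge1$, $K\ge1$ and $p_n\in[0,1]$. Let $(\mathcal{G}(n),\mathcal{A}_1(n),\dots,\mathcal{A}_K(n))$ be the output of the Tetris exploration algorithm, and let $\mathcal{N}_i(n)=\{v:h_v(n)=i\}$ be the sets of vertices at height $i$ in the final state of the Tetris model on $G(n,p_n)$ (both described in the context). Then the joint distribution of $(\mathcal{G}(n),\mathcal{A}_1(n),\dots,\mathcal{A}_K(n))$ is identical to that of $(G(n,p_n),\mathcal{N}_1(n),\dots,\mathcal{N}_K(n))$.
   Context: $G(n,p_n)$ is the Erdős–Rényi random graph on $[n]$ with independent edge probability $p_n$. Tetris model: given a realization of $G(n,p_n)$, set $h_v(0)=0$ for all $v$. At step $t+1$ a vertex $u$ is chosen uniformly at random among vertices not selected before; letting $m=\max\{h_w(t):w \text{ a neighbour of } u\}$ (with $m=0$ if $u$ has no neighbours), set $h_u(t+1)=m+1$ if $m<K$ and $h_u(t+1)=0$ otherwise; all other heights are unchanged. Tetris exploration algorithm: maintain $\mathcal{A}_k(t)$ (explored vertices at height $k$, $0\le k\le K$; height 0 meaning frozen) and unexplored set $\mathcal{U}(t)$, initially $\mathcal{A}_k(0)=\varnothing$, $\mathcal{U}(0)=[n]$; $\mathcal{A}(t)=\bigcup_{k=0}^K\mathcal{A}_k(t)$. At step $t+1$, select $v\in\mathcal{U}(t)$ uniformly at random, remove it from $\mathcal{U}$, and join it to each vertex of $\mathcal{A}(t)$ independently with probability $p_n$. Let $j$ be the maximal height among the vertices of $\mathcal{A}(t)$ joined to $v$ ($j=0$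 if none). If $j\le K-1$, $v$ receives height $j+1$ (joins $\mathcal{A}_{j+1}$); otherwise $v$ receives height $0$ (joins $\mathcal{A}_0$). After $n$ steps the algorithm outputs $(\mathcal{A}_1(n),\dots,\mathcal{A}_K(n))$ and the graph $\mathcal{G}(n)$ on $[n]$ of all edges added. *)

theory Defs
  imports "HOL-Probability.Probability"
begin

text \<open>Vertex set [n] = {1..n}; a graph is a set of edges, each edge a 2-element subset of [n].\<close>

definition pairs :: "nat \<Rightarrow> nat set set" where
  "pairs n = {e. e \<subseteq> {1..n} \<and> card e = 2}"

definition gnp :: "nat \<Rightarrow> real \<Rightarrow> nat set set pmf" where
  "gnp n p = map_pmf (\<lambda>f. {e \<in> pairs n. f e}) (Pi_pmf (pairs n) False (\<lambda>_. bernoulli_pmf p))"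

text \<open>Tetris model. State: (set of not-yet-selected vertices, heights).\<close>
definition tetris_step :: "nat \<Rightarrow> nat \<Rightarrow> nat set set \<Rightarrow> nat set \<times> (nat \<Rightarrow> nat)
    \<Rightarrow> (nat set \<times> (nat \<Rightarrow> nat)) pmf" where
  "tetris_step n K G s = (case s of (U, h) \<Rightarrow>
     bind_pmf (pmf_of_set U) (\<lambda>u.
       let m = Max (insert 0 (h ` {w \<in> {1..n}. {u, w} \<in> G})) in
       return_pmf (U - {u}, h(u := (if m < K then m + 1 else 0)))))"

definition tetris_run :: "nat \<Rightarrow> nat \<Rightarrow> nat set set \<Rightarrow> (nat set \<times> (nat \<Rightarrow> nat)) pmf" where
  "tetris_run n K G =
     ((\<lambda>S. bind_pmf S (tetris_step n K G)) ^^ n) (return_pmf ({1..n}, \<lambda>_. 0))"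

definition tetris_model :: "nat \<Rightarrow> nat \<Rightarrow> real \<Rightarrow> (nat set set \<times> nat set list) pmf" where
  "tetris_model n K p =
     bind_pmf (gnp n p) (\<lambda>G.
       map_pmf (\<lambda>(U, h). (G, map (\<lambda>i. {v \<in> {1..n}. h v = i}) [1..<K+1])) (tetris_run n K G))"

text \<open>State: (unexplored set U, edges added so far, heights of
  explored vertices); the explored vertices at height k are A_k = {w in [n] - U. h w = k}
  (height 0 = frozen), and A = [n] - U.\<close>
definition explore_step :: "nat \<Rightarrow> nat \<Rightarrow> real \<Rightarrow> nat set \<times> nat set set \<times> (nat \<Rightarrow> nat)
    \<Rightarrow> (nat set \<times> nat set set \<times> (nat \<Rightarrow> nat)) pmf" where
  "explore_step n K p s = (case s of (U, E, h) \<Rightarrow>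
     bind_pmf (pmf_of_set U) (\<lambda>v.
       bind_pmf (Pi_pmf ({1..n} - U) False (\<lambda>_. bernoulli_pmf p)) (\<lambda>J.
         let joined = {w \<in> {1..n} - U. J w};
             j = Max (insert 0 (h ` joined)) in
         return_pmf (U - {v}, E \<union> {{v, w} | w. w \<in> joined},
                     h(v := (if j \<le> K - 1 then j + 1 else 0))))))"

definition explore_run :: "nat \<Rightarrow> nat \<Rightarrow> real \<Rightarrow> (nat set \<times> nat set set \<times> (nat \<Rightarrow> nat)) pmf" where
  "explore_run n K p =
     ((\<lambda>S. bind_pmf S (explore_step n K p)) ^^ n) (return_pmf ({1..n}, {}, \<lambda>_. 0))"

definition tetris_exploration :: "nat \<Rightarrow> nat \<Rightarrow> real \<Rightarrow> (nat set set \<times> nat set list) pmf" where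
  "tetris_exploration n K p =
     map_pmf (\<lambda>(U, E, h). (E, map (\<lambda>k. {w \<in> {1..n} - U. h w = k}) [1..<K+1])) (explore_run n K p)"

end

theory Submission
  imports Defs
begin

definition rg :: "real \<Rightarrow> nat set set \<Rightarrow> nat set set pmf" where
  "rg p P = map_pmf (\<lambda>f. {e\<in>P. f e}) (Pi_pmf P False (\<lambda>_. bernoulli_pmf p))"

lemma set_rg: "finite P \<Longrightarrow> F \<in> set_pmf (rg p P) \<Longrightarrow> F \<subseteq> P"
  unfolding rg_def by auto

lemma rg_union:
  assumes "finite P" "finite Q" "P \<inter> Q = {}"
  shows "rg p (P \<union> Q) = map_pmf (\<lambda>(X,Y). X \<union> Y) (pair_pmf (rg p P) (rg p Q))"
proof -
  have "rg p (P \<union> Q) = map_pmf (\<lambda>f. {e\<in>P \<union> Q. f e}) (map_pmf (\<lambda>(f,g) x. if x \<in> P then f x else g x)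
             (pair_pmf (Pi_pmf P False (\<lambda>_. bernoulli_pmf p)) (Pi_pmf Q False (\<lambda>_. bernoulli_pmf p))))"
    unfolding rg_def using assms by (simp add: Pi_pmf_union)
  also have "\<dots> = map_pmf (\<lambda>(X,Y). X \<union> Y) (map_pmf (map_prod (\<lambda>f. {e\<in>P. f e}) (\<lambda>f. {e\<in>Q. f e}))
             (pair_pmf (Pi_pmf P False (\<lambda>_. bernoulli_pmf p)) (Pi_pmf Q False (\<lambda>_. bernoulli_pmf p))))"
    unfolding pmf.map_comp using assms(3)
    by (intro map_pmf_cong refl) (auto simp: fun_eq_iff)
  also have "\<dots> = map_pmf (\<lambda>(X,Y). X \<union> Y) (pair_pmf (rg p P) (rg p Q))"
    unfolding rg_def map_pair[symmetric] by (simp add: map_prod_def)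
  finally show ?thesis .
qed

lemma rg_image:
  assumes "finite A" "u \<notin> A"
  shows "rg p ((\<lambda>w. {u,w}) ` A) = map_pmf (\<lambda>J. {{u,w} |w. w \<in> {w\<in>A. J w}}) (Pi_pmf A False (\<lambda>_. bernoulli_pmf p))"
proof -
  have bij: "bij_betw (\<lambda>w. {u,w}) A ((\<lambda>w. {u,w}) ` A)"
    unfolding bij_betw_def inj_on_def using assms(2) by (auto simp: doubleton_eq_iff)
  have out: "x \<notin> A \<Longrightarrow> {u,x} \<notin> (\<lambda>w. {u,w}) ` A" for x
    using assms(2) by (auto simp: doubleton_eq_iff)
  show ?thesis
    unfolding rg_def
    by (subst Pi_pmf_bij_betw[OF assms(1) bij out]) (auto simp: pmf.map_comp intro!: map_pmf_cong)
qed

definition Rp :: "nat \<Rightarrow> nat set \<Rightarrow> nat set set" where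
  "Rp n U = {e \<in> pairs n. \<not> e \<subseteq> {1..n} - U}"

lemma finite_pairs: "finite (pairs n)"
proof -
  have "pairs n \<subseteq> Pow {1..n}" unfolding pairs_def by auto
  thus ?thesis by (rule finite_subset) simp
qed

lemma finite_Rp: "finite (Rp n U)"
  unfolding Rp_def using finite_pairs by simp

lemma insert0_image:
  assumes "Y \<subseteq> X" "\<And>w. w \<in> X \<Longrightarrow> w \<notin> Y \<Longrightarrow> h w = (0::nat)"
  shows "insert 0 (h ` X) = insert 0 (h ` Y)"
  using assms by auto

lemma step_eq:
  fixes n K :: nat
  assumes K: "K \<ge> 1" and U: "U \<subseteq> {1..n}" "u \<in> U"
    and E: "E \<subseteq> {e\<in>pairs n. e \<subseteq> {1..n}-U}" and h: "\<forall>w. w \<notin> {1..n}-U \<longrightarrow> h w = 0"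
  shows "bind_pmf (rg p (Rp n U)) (\<lambda>F. return_pmf (E \<union> F, U-{u}, h(u := (let m = Max (insert 0 (h ` {w \<in> {1..n}. {u,w} \<in> E \<union> F})) in if m < K then m+1 else 0))))
   = bind_pmf (Pi_pmf ({1..n}-U) False (\<lambda>_. bernoulli_pmf p)) (\<lambda>J. map_pmf (\<lambda>F. (E \<union> {{u,w}|w. w \<in> {w\<in>{1..n}-U. J w}} \<union> F, U-{u}, h(u := (let j = Max (insert 0 (h ` {w\<in>{1..n}-U. J w})) in if j \<le> K-1 then j+1 else 0)))) (rg p (Rp n (U-{u}))))"
proof -
  define A where "A = {1..n} - U"
  define S where "S = (\<lambda>w. {u,w}) ` A"
  define Ev where "Ev = (\<lambda>J. {{u,w} |w. w \<in> {w\<in>A. J w}})"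
  have uA: "u \<notin> A" "u \<in> {1..n}" using U unfolding A_def by auto
  have finA: "finite A" unfolding A_def by simp
  have A': "{1..n} - (U - {u}) = insert u A" using U unfolding A_def by auto
  have split: "Rp n U = S \<union> Rp n (U-{u})"
  proof (intro equalityI subsetI)
    fix e assume e: "e \<in> Rp n U"
    then have ep: "e \<in> pairs n" "\<not> e \<subseteq> A" unfolding Rp_def A_def by auto
    show "e \<in> S \<union> Rp n (U-{u})"
    proof (cases "e \<subseteq> insert u A")
      case True
      from ep(1) obtain a b where ab: "e = {a,b}" "a \<noteq> b" unfolding pairs_def by (auto simp: card_2_iff)
      with True ep(2) have "u \<in> e" by auto
      with ab True ep(2) have "\<exists>w\<in>A. e = {u,w}" by auto
      thus ?thesis unfolding S_def by auto
    next
      case False thus ?thesis using ep(1) A' unfolding Rp_def by auto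
    qed
  next
    fix e assume "e \<in> S \<union> Rp n (U-{u})"
    then show "e \<in> Rp n U"
    proof
      assume "e \<in> S"
      then obtain w where w: "w \<in> A" "e = {u,w}" unfolding S_def by auto
      have "w \<noteq> u" using w uA by auto
      hence "e \<in> pairs n" using w uA unfolding pairs_def A_def by auto
      thus ?thesis using w uA unfolding Rp_def A_def by auto
    next
      assume "e \<in> Rp n (U-{u})" thus ?thesis using A' unfolding Rp_def A_def by auto
    qed
  qed
  have disj: "S \<inter> Rp n (U-{u}) = {}"
    unfolding S_def Rp_def using A' by auto
  have finS: "finite S" unfolding S_def using finA by simp
  have rgU: "rg p (Rp n U) = map_pmf (\<lambda>(X,Y). X \<union> Y) (pair_pmf (map_pmf Ev (Pi_pmf A False (\<lambda>_. bernoulli_pmf p))) (rg p (Rp n (U-{u}))))"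
    unfolding split rg_union[OF finS finite_Rp disj] unfolding S_def Ev_def rg_image[OF finA uA(1)] ..
  have key: "insert 0 (h ` {w \<in> {1..n}. {u,w} \<in> E \<union> (Ev J \<union> F)}) = insert 0 (h ` {w\<in>A. J w})"
    if F: "F \<subseteq> Rp n (U-{u})" for J F
  proof (rule insert0_image)
    show "{w\<in>A. J w} \<subseteq> {w \<in> {1..n}. {u,w} \<in> E \<union> (Ev J \<union> F)}"
      unfolding Ev_def A_def by auto
  next
    fix w assume w: "w \<in> {w \<in> {1..n}. {u,w} \<in> E \<union> (Ev J \<union> F)}" "w \<notin> {w\<in>A. J w}"
    show "h w = 0"
    proof (cases "w \<in> A")
      case False thus ?thesis using h unfolding A_def by auto
    next
      case True
      have "{u,w} \<notin> E" using E uA unfolding A_def by auto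
      moreover have "{u,w} \<notin> F" using F True A' unfolding Rp_def by auto
      moreover have "{u,w} \<notin> Ev J"
      proof
        assume "{u,w} \<in> Ev J"
        then obtain w' where "w' \<in> A" "J w'" "{u,w} = {u,w'}" unfolding Ev_def by auto
        with True uA w(2) show False by (auto simp: doubleton_eq_iff)
      qed
      ultimately show ?thesis using w(1) by auto
    qed
  qed
  have "bind_pmf (rg p (Rp n U)) (\<lambda>F. return_pmf (E \<union> F, U-{u}, h(u := (let m = Max (insert 0 (h ` {w \<in> {1..n}. {u,w} \<in> E \<union> F})) in if m < K then m+1 else 0))))
     = bind_pmf (Pi_pmf A False (\<lambda>_. bernoulli_pmf p)) (\<lambda>J. bind_pmf (rg p (Rp n (U-{u}))) (\<lambda>F. return_pmf (E \<union> (Ev J \<union> F), U-{u}, h(u := (let m = Max (insert 0 (h ` {w \<in> {1..n}. {u,w} \<in> E \<union> (Ev J \<union> F)})) in if m < K then m+1 else 0)))))"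
    unfolding rgU by (simp only: pair_pmf_def map_pmf_def bind_assoc_pmf bind_return_pmf prod.case)
  also have "\<dots> = bind_pmf (Pi_pmf A False (\<lambda>_. bernoulli_pmf p)) (\<lambda>J. bind_pmf (rg p (Rp n (U-{u}))) (\<lambda>F. return_pmf (E \<union> Ev J \<union> F, U-{u}, h(u := (let j = Max (insert 0 (h ` {w\<in>A. J w})) in if j \<le> K-1 then j+1 else 0)))))"
  proof (intro bind_pmf_cong refl)
    fix J F assume "F \<in> set_pmf (rg p (Rp n (U-{u})))"
    hence "F \<subseteq> Rp n (U-{u})" using set_rg finite_Rp by blast
    note kk = key[OF this, of J]
    have KK: "(j::nat) < K \<longleftrightarrow> j \<le> K - 1" for j using K by arith
    show "return_pmf (E \<union> (Ev J \<union> F), U-{u}, h(u := (let m = Max (insert 0 (h ` {w \<in> {1..n}. {u,w} \<in> E \<union> (Ev J \<union> F)})) in if m < K then m+1 else 0)))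
       = return_pmf (E \<union> Ev J \<union> F, U-{u}, h(u := (let j = Max (insert 0 (h ` {w\<in>A. J w})) in if j \<le> K-1 then j+1 else 0)))"
      unfolding Let_def kk Un_assoc KK ..
  qed
  finally have R: "bind_pmf (rg p (Rp n U)) (\<lambda>F. return_pmf (E \<union> F, U-{u}, h(u := (let m = Max (insert 0 (h ` {w \<in> {1..n}. {u,w} \<in> E \<union> F})) in if m < K then m+1 else 0))))
     = bind_pmf (Pi_pmf A False (\<lambda>_. bernoulli_pmf p)) (\<lambda>J. bind_pmf (rg p (Rp n (U-{u}))) (\<lambda>F. return_pmf (E \<union> Ev J \<union> F, U-{u}, h(u := (let j = Max (insert 0 (h ` {w\<in>A. J w})) in if j \<le> K-1 then j+1 else 0)))))" .
  show ?thesis unfolding map_pmf_def R by (simp only: A_def Ev_def)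
qed

definition T :: "nat \<Rightarrow> nat \<Rightarrow> nat set set \<Rightarrow> nat \<Rightarrow> (nat set \<times> (nat \<Rightarrow> nat)) pmf" where
  "T n K G t = ((\<lambda>S. bind_pmf S (tetris_step n K G)) ^^ t) (return_pmf ({1..n}, \<lambda>_. 0))"

definition X :: "nat \<Rightarrow> nat \<Rightarrow> real \<Rightarrow> nat \<Rightarrow> (nat set \<times> nat set set \<times> (nat \<Rightarrow> nat)) pmf" where
  "X n K p t = ((\<lambda>S. bind_pmf S (explore_step n K p)) ^^ t) (return_pmf ({1..n}, {}, \<lambda>_. 0))"

definition invs :: "nat \<Rightarrow> nat \<Rightarrow> nat set \<times> nat set set \<times> (nat \<Rightarrow> nat) \<Rightarrow> bool" where
  "invs n t s = (case s of (U,E,h) \<Rightarrow> U \<subseteq> {1..n} \<and> card U = n - t \<and> E \<subseteq> {e\<in>pairs n. e \<subseteq> {1..n}-U} \<and> (\<forall>w. w \<notin> {1..n}-U \<longrightarrow> h w = 0))"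

lemma explore_inv: "t \<le> n \<Longrightarrow> s \<in> set_pmf (X n K p t) \<Longrightarrow> invs n t s"
proof (induction t arbitrary: s)
  case 0 thus ?case by (simp add: X_def invs_def)
next
  case (Suc t)
  from Suc.prems(2) obtain s0 where s0: "s0 \<in> set_pmf (X n K p t)" "s \<in> set_pmf (explore_step n K p s0)"
    by (auto simp: X_def)
  obtain U E h where s0e: "s0 = (U,E,h)" by (cases s0) auto
  have I: "invs n t (U,E,h)" using Suc.IH[of s0] Suc.prems s0 s0e by simp
  hence U: "U \<subseteq> {1..n}" "card U = n - t" "E \<subseteq> {e\<in>pairs n. e \<subseteq> {1..n}-U}" "\<forall>w. w \<notin> {1..n}-U \<longrightarrow> h w = 0"
    unfolding invs_def by auto
  have finU: "finite U" using U(1) finite_subset by blast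
  have neU: "U \<noteq> {}" using U(2) Suc.prems(1) by auto
  from s0(2) obtain v J j where v: "v \<in> U" and
    s: "s = (U - {v}, E \<union> {{v, w} | w. w \<in> {w \<in> {1..n} - U. J w}}, h(v := j))"
    unfolding s0e explore_step_def using finU neU by (auto simp: Let_def)
  have vn: "v \<in> {1..n}" using v U(1) by auto
  have A': "{1..n} - (U - {v}) = insert v ({1..n} - U)" using vn by auto
  have "card (U - {v}) = n - Suc t" using U(2) v finU by simp
  moreover have "E \<union> {{v, w} | w. w \<in> {w \<in> {1..n} - U. J w}} \<subseteq> {e\<in>pairs n. e \<subseteq> {1..n}-(U-{v})}"
  proof -
    have "{v,w} \<in> pairs n" if "w \<in> {1..n} - U" for w
    proof -
      have "v \<noteq> w" using that v by auto
      thus ?thesis using that vn unfolding pairs_def by auto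
    qed
    thus ?thesis using U(3) A' by auto
  qed
  moreover have "\<forall>w. w \<notin> {1..n}-(U-{v}) \<longrightarrow> (h(v := j)) w = 0"
    using U(4) A' by auto
  ultimately show ?case unfolding s invs_def using U(1) by auto
qed

lemma step_eq':
  fixes n K :: nat
  assumes K: "K \<ge> 1" and U: "U \<subseteq> {1..n}" "u \<in> U"
    and E: "E \<subseteq> {e\<in>pairs n. e \<subseteq> {1..n}-U}" and h: "\<forall>w. w \<notin> {1..n}-U \<longrightarrow> h w = 0"
  shows "bind_pmf (rg p (Rp n U)) (\<lambda>F. return_pmf (E \<union> F, U-{u}, h(u := (if Max (insert 0 (h ` {w \<in> {1..n}. {u,w} \<in> E \<union> F})) < K then Max (insert 0 (h ` {w \<in> {1..n}. {u,w} \<in> E \<union> F})) +1 else 0))))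
   = bind_pmf (Pi_pmf ({1..n}-U) False (\<lambda>_. bernoulli_pmf p)) (\<lambda>J. map_pmf (\<lambda>F. (E \<union> {{u,w}|w. w \<in> {w\<in>{1..n}-U. J w}} \<union> F, U-{u}, h(u := (if Max (insert 0 (h ` {w\<in>{1..n}-U. J w})) \<le> K-1 then Max (insert 0 (h ` {w\<in>{1..n}-U. J w}))+1 else 0)))) (rg p (Rp n (U-{u}))))"
  using step_eq[OF assms, of p] unfolding Let_def .

lemma state_eq:
  assumes K: "K \<ge> 1" and I: "invs n t (U,E,h)" and t: "t < n"
  shows "bind_pmf (rg p (Rp n U)) (\<lambda>F. map_pmf (Pair (E\<union>F)) (tetris_step n K (E\<union>F) (U,h)))
       = bind_pmf (explore_step n K p (U,E,h)) (\<lambda>(U',E',h'). map_pmf (\<lambda>F. (E'\<union>F, U', h')) (rg p (Rp n U')))"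
proof -
  have U: "U \<subseteq> {1..n}" "card U = n - t" "E \<subseteq> {e\<in>pairs n. e \<subseteq> {1..n}-U}" "\<forall>w. w \<notin> {1..n}-U \<longrightarrow> h w = 0"
    using I unfolding invs_def by auto
  have finU: "finite U" using U(1) finite_subset by blast
  have neU: "U \<noteq> {}" using U(2) t by auto
  have "bind_pmf (rg p (Rp n U)) (\<lambda>F. map_pmf (Pair (E\<union>F)) (tetris_step n K (E\<union>F) (U,h)))
      = bind_pmf (rg p (Rp n U)) (\<lambda>F. bind_pmf (pmf_of_set U) (\<lambda>u. return_pmf (E \<union> F, U-{u}, h(u := (if Max (insert 0 (h ` {w \<in> {1..n}. {u,w} \<in> E \<union> F})) < K then Max (insert 0 (h ` {w \<in> {1..n}. {u,w} \<in> E \<union> F})) +1 else 0)))))"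
    unfolding tetris_step_def by (simp only: Let_def prod.case map_bind_pmf map_return_pmf)
  also have "\<dots> = bind_pmf (pmf_of_set U) (\<lambda>u. bind_pmf (rg p (Rp n U)) (\<lambda>F. return_pmf (E \<union> F, U-{u}, h(u := (if Max (insert 0 (h ` {w \<in> {1..n}. {u,w} \<in> E \<union> F})) < K then Max (insert 0 (h ` {w \<in> {1..n}. {u,w} \<in> E \<union> F})) +1 else 0)))))"
    by (rule bind_commute_pmf)
  also have "\<dots> = bind_pmf (pmf_of_set U) (\<lambda>u. bind_pmf (Pi_pmf ({1..n}-U) False (\<lambda>_. bernoulli_pmf p)) (\<lambda>J. map_pmf (\<lambda>F. (E \<union> {{u,w}|w. w \<in> {w\<in>{1..n}-U. J w}} \<union> F, U-{u}, h(u := (if Max (insert 0 (h ` {w\<in>{1..n}-U. J w})) \<le> K-1 then Max (insert 0 (h ` {w\<in>{1..n}-U. J w}))+1 else 0)))) (rg p (Rp n (U-{u})))))"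
  proof (intro bind_pmf_cong refl)
    fix u assume "u \<in> set_pmf (pmf_of_set U)"
    hence u: "u \<in> U" using finU neU by simp
    show "bind_pmf (rg p (Rp n U)) (\<lambda>F. return_pmf (E \<union> F, U-{u}, h(u := (if Max (insert 0 (h ` {w \<in> {1..n}. {u,w} \<in> E \<union> F})) < K then Max (insert 0 (h ` {w \<in> {1..n}. {u,w} \<in> E \<union> F})) +1 else 0))))
   = bind_pmf (Pi_pmf ({1..n}-U) False (\<lambda>_. bernoulli_pmf p)) (\<lambda>J. map_pmf (\<lambda>F. (E \<union> {{u,w}|w. w \<in> {w\<in>{1..n}-U. J w}} \<union> F, U-{u}, h(u := (if Max (insert 0 (h ` {w\<in>{1..n}-U. J w})) \<le> K-1 then Max (insert 0 (h ` {w\<in>{1..n}-U. J w}))+1 else 0)))) (rg p (Rp n (U-{u}))))"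
      by (rule step_eq'[OF K U(1) u U(3) U(4)])
  qed
  also have "\<dots> = bind_pmf (explore_step n K p (U,E,h)) (\<lambda>(U',E',h'). map_pmf (\<lambda>F. (E'\<union>F, U', h')) (rg p (Rp n U')))"
    unfolding explore_step_def by (simp only: Let_def prod.case bind_assoc_pmf bind_return_pmf)
  finally show ?thesis .
qed

lemma Rp_full: "Rp n {Suc 0..n} = pairs n"
  unfolding Rp_def pairs_def by auto

lemma main:
  assumes K: "K \<ge> 1"
  shows "t \<le> n \<Longrightarrow> bind_pmf (gnp n p) (\<lambda>G. map_pmf (Pair G) (T n K G t))
      = bind_pmf (X n K p t) (\<lambda>(U,E,h). map_pmf (\<lambda>F. (E\<union>F,U,h)) (rg p (Rp n U)))"
proof (induction t)
  case 0
  show ?case unfolding T_def X_def gnp_def rg_def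
    by (simp add: map_pmf_def bind_assoc_pmf bind_return_pmf Rp_full)
next
  case (Suc t)
  have "bind_pmf (gnp n p) (\<lambda>G. map_pmf (Pair G) (T n K G (Suc t)))
     = bind_pmf (bind_pmf (gnp n p) (\<lambda>G. map_pmf (Pair G) (T n K G t))) (\<lambda>(G,s). map_pmf (Pair G) (tetris_step n K G s))"
    unfolding T_def by (simp add: map_bind_pmf bind_map_pmf bind_assoc_pmf)
  also have "\<dots> = bind_pmf (bind_pmf (X n K p t) (\<lambda>(U,E,h). map_pmf (\<lambda>F. (E\<union>F,U,h)) (rg p (Rp n U)))) (\<lambda>(G,s). map_pmf (Pair G) (tetris_step n K G s))"
    using Suc by simp
  also have "\<dots> = bind_pmf (X n K p t) (\<lambda>(U,E,h). bind_pmf (rg p (Rp n U)) (\<lambda>F. map_pmf (Pair (E\<union>F)) (tetris_step n K (E\<union>F) (U,h))))"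
    by (simp add: bind_assoc_pmf bind_map_pmf case_prod_unfold)
  also have "\<dots> = bind_pmf (X n K p t) (\<lambda>(U,E,h). bind_pmf (explore_step n K p (U,E,h)) (\<lambda>(U',E',h'). map_pmf (\<lambda>F. (E'\<union>F, U', h')) (rg p (Rp n U'))))"
  proof (intro bind_pmf_cong refl)
    fix s assume s: "s \<in> set_pmf (X n K p t)"
    obtain U E h where se: "s = (U,E,h)" by (cases s) auto
    have "invs n t (U,E,h)" using explore_inv[of t n s K p] s se Suc.prems by simp
    from state_eq[OF K this, of p] Suc.prems
    show "(case s of (U,E,h) \<Rightarrow> bind_pmf (rg p (Rp n U)) (\<lambda>F. map_pmf (Pair (E\<union>F)) (tetris_step n K (E\<union>F) (U,h))))
        = (case s of (U,E,h) \<Rightarrow> bind_pmf (explore_step n K p (U,E,h)) (\<lambda>(U',E',h'). map_pmf (\<lambda>F. (E'\<union>F, U', h')) (rg p (Rp n U'))))"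
      unfolding se by simp
  qed
  also have "\<dots> = bind_pmf (X n K p (Suc t)) (\<lambda>(U,E,h). map_pmf (\<lambda>F. (E\<union>F,U,h)) (rg p (Rp n U)))"
    unfolding X_def by (simp add: bind_assoc_pmf case_prod_unfold)
  finally show ?case .
qed

theorem proposition2:
  fixes n K :: nat and p :: real
  assumes "n \<ge> 1" and "K \<ge> 1" and "0 \<le> p" and "p \<le> 1"
  shows "tetris_exploration n K p = tetris_model n K p"
proof -
  define L where "L = (\<lambda>h. map (\<lambda>i. {v \<in> {1..n}. h v = (i::nat)}) [1..<K+1])"
  have "tetris_model n K p = map_pmf (\<lambda>(G,U,h). (G, L h)) (bind_pmf (gnp n p) (\<lambda>G. map_pmf (Pair G) (T n K G n)))"
    unfolding tetris_model_def T_def tetris_run_def L_def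
    by (simp add: map_bind_pmf pmf.map_comp case_prod_unfold comp_def)
  also have "\<dots> = map_pmf (\<lambda>(G,U,h). (G, L h)) (bind_pmf (X n K p n) (\<lambda>(U,E,h). map_pmf (\<lambda>F. (E\<union>F,U,h)) (rg p (Rp n U))))"
    using main[OF assms(2), of n n p] by simp
  also have "\<dots> = bind_pmf (X n K p n) (\<lambda>(U,E,h). return_pmf (E, L h))"
    unfolding map_bind_pmf
  proof (intro bind_pmf_cong refl)
    fix s assume s: "s \<in> set_pmf (X n K p n)"
    obtain U E h where se: "s = (U,E,h)" by (cases s) auto
    have "invs n n (U,E,h)" using explore_inv[of n n s K p] s se by simp
    hence "U = {}" unfolding invs_def using finite_subset[of U "{1..n}"] by auto
    moreover have "Rp n {} = {}" unfolding Rp_def pairs_def by auto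
    ultimately show "map_pmf (\<lambda>(G,U,h). (G, L h)) (case s of (U,E,h) \<Rightarrow> map_pmf (\<lambda>F. (E\<union>F,U,h)) (rg p (Rp n U)))
        = (case s of (U,E,h) \<Rightarrow> return_pmf (E, L h))"
      unfolding se rg_def by simp
  qed
  also have "\<dots> = tetris_exploration n K p"
    unfolding tetris_exploration_def explore_run_def X_def[symmetric] map_pmf_def
  proof (intro bind_pmf_cong refl)
    fix s assume s: "s \<in> set_pmf (X n K p n)"
    obtain U E h where se: "s = (U,E,h)" by (cases s) auto
    have "invs n n (U,E,h)" using explore_inv[of n n s K p] s se by simp
    hence "U = {}" unfolding invs_def using finite_subset[of U "{1..n}"] by auto
    thus "(case s of (U,E,h) \<Rightarrow> return_pmf (E, L h)) = return_pmf (case s of (U, E, h) \<Rightarrow> (E, map (\<lambda>k. {w \<in> {1..n} - U. h w = k}) [1..<K + 1]))"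
      unfolding se L_def by simp
  qed
  finally show ?thesis ..
qed

end
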